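(* If $p\in\mathbb{C}[u,\mathbf{v}]$ satisfies $p_N\equiv0$ on $U(N)$ for every $N\ge1$, then $p$ is the zero polynomial.
   Context: $\mathbb{C}[u,\mathbf{v}]$ is the polynomial algebra over $\mathbb{C}$ in $u$ and $v_1,v_2,\dots$. For $p\in\mathbb{C}[u,\mathbf{v}]$, $p_N:U(N)\to M_N(\mathbb{C})$ is $p_N(U)=p(U,\mathrm{tr}(U),\mathrm{tr}(U^2),\dots)$, substituting $u=U$ and $v_j=\mathrm{tr}(U^j)I$, with $\mathrm{tr}(A)=\frac1N\sum_jA_{jj}$. *)

theory Defs
  imports "HOL-Library.Poly_Mapping" "Jordan_Normal_Form.Matrix"
begin

text \<open>A monomial is a finitely supported exponent map
  nat =>0 nat, where variable 0 stands for u and variable j >= 1 stands for v_j.\<close>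

type_synonym cpoly_uv = "(nat \<Rightarrow>\<^sub>0 nat) \<Rightarrow>\<^sub>0 complex"

definition adj_mat :: "complex mat \<Rightarrow> complex mat" where
  "adj_mat A = mat (dim_col A) (dim_row A) (\<lambda>(i, j). cnj (A $$ (j, i)))"

definition unitary_group :: "nat \<Rightarrow> complex mat set" where
  "unitary_group N = {U \<in> carrier_mat N N. U * adj_mat U = 1\<^sub>m N \<and> adj_mat U * U = 1\<^sub>m N}"

definition ntr :: "nat \<Rightarrow> complex mat \<Rightarrow> complex" where
  "ntr N A = (\<Sum>j<N. A $$ (j, j)) / of_nat N"

text \<open>p_N(U) = p(U, tr(U), tr(U^2), ...): substitute u = U and v_j = tr(U^j) I.
  Since the v_j become scalar matrices, each monomial u^a v_1^b1 ... evaluates to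
  (prod_j tr(U^j)^bj) U^a.\<close>

definition eval_pN :: "nat \<Rightarrow> cpoly_uv \<Rightarrow> complex mat \<Rightarrow> complex mat" where
  "eval_pN N p U =
     mat N N (\<lambda>(i, k). \<Sum>m\<in>Poly_Mapping.keys p.
        Poly_Mapping.lookup p m * (\<Prod>j\<in>Poly_Mapping.keys m - {0}. ntr N (U ^\<^sub>m j) ^ Poly_Mapping.lookup m j)
          * (U ^\<^sub>m Poly_Mapping.lookup m 0) $$ (i, k))"

end

theory Submission imports Defs "HOL-Computational_Algebra.Polynomial" begin

lemma fiber_zero:
  fixes c :: "'m \<Rightarrow> complex" and g :: "'m \<Rightarrow> complex"
  assumes fin: "finite M" and inf: "infinite S"
    and H: "\<And>x. x \<in> S \<Longrightarrow> (\<Sum>m\<in>M. c m * g m * x ^ h m) = 0"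
  shows "(\<Sum>m\<in>{m\<in>M. h m = e}. c m * g m) = 0"
proof -
  define Q where "Q e = (\<Sum>m\<in>{m\<in>M. h m = e}. c m * g m)" for e
  define q where "q = (\<Sum>e\<in>h ` M. monom (Q e) e)"
  have eq: "(\<Sum>m\<in>M. c m * g m * x ^ h m) = poly q x" for x
  proof -
    have "(\<Sum>m\<in>M. c m * g m * x ^ h m) = (\<Sum>e\<in>h ` M. \<Sum>m\<in>{m\<in>M. h m = e}. c m * g m * x ^ h m)"
      using fin by (rule sum.image_gen)
    also have "\<dots> = (\<Sum>e\<in>h ` M. Q e * x ^ e)"
      unfolding Q_def sum_distrib_right by (intro sum.cong refl) auto
    also have "\<dots> = poly q x" unfolding q_def by (simp add: poly_sum poly_monom)
    finally show ?thesis .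
  qed
  have "q = 0"
  proof (rule ccontr)
    assume "q \<noteq> 0"
    hence "finite {x. poly q x = 0}" by (rule poly_roots_finite)
    moreover have "S \<subseteq> {x. poly q x = 0}" using H eq by auto
    ultimately show False using inf finite_subset by blast
  qed
  hence "coeff q e = 0" by simp
  moreover have "coeff q e = (\<Sum>e'\<in>h ` M. if e' = e then Q e' else 0)"
    unfolding q_def by (simp add: coeff_sum coeff_monom)
  moreover have "(\<Sum>e'\<in>h ` M. if e' = e then Q e' else 0) = Q e"
    proof (cases "e \<in> h ` M")
    case True thus ?thesis using fin by (simp add: Q_def sum.delta)
  next
    case False
    have emp: "{m\<in>M. h m = e} = {}" using False by auto
    have "Q e = 0" unfolding Q_def emp by simp
    moreover have "(\<Sum>e'\<in>h ` M. if e' = e then Q e' else 0) = 0"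
      using False by (intro sum.neutral) auto
    ultimately show ?thesis by simp
  qed
  ultimately show ?thesis unfolding Q_def by simp
qed

lemma unit_circle_infinite: "infinite {x::complex. cmod x = 1}"
proof
  assume "finite {x::complex. cmod x = 1}"
  moreover have "cis ` {0..pi} \<subseteq> {x. cmod x = 1}" by auto
  moreover have "inj_on cis {0..pi}"
  proof
    fix a b assume "a \<in> {0..pi}" "b \<in> {0..pi}" "cis a = cis b"
    hence "cos a = cos b" by (metis cis.sel(1))
    thus "a = b" using \<open>a \<in> {0..pi}\<close> \<open>b \<in> {0..pi}\<close> by (auto intro: cos_inj_pi)
  qed
  ultimately have "finite {0..pi}" by (metis finite_imageD finite_subset)
  thus False using pi_gt_zero infinite_Icc by blast
qed

lemma root_unity_ne1:
  assumes "0 < j" "j < K"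
  shows "cis (2 * pi / real K) ^ j \<noteq> 1"
proof
  assume "cis (2 * pi / real K) ^ j = 1"
  hence "cis (2 * pi * real j / real K) = 1" by (simp add: DeMoivre mult.commute)
  hence "cos (2 * pi * real j / real K) = 1" by (metis cis.sel(1) one_complex.sel(1))
  then obtain n :: int where n: "2 * pi * real j / real K = of_int n * 2 * pi"
    by (auto simp: cos_one_2pi_int)
  from assms have "real K > 0" by simp
  with n have "real j = of_int n * real K" by (simp add: field_simps)
  hence "int j = n * int K" by (metis of_int_eq_iff of_int_mult of_int_of_nat_eq)
  moreover have "int j > 0" "int j < int K" using assms by auto
  ultimately have "n > 0" by (simp add: zero_less_mult_iff)
  hence "n * int K \<ge> 1 * int K" by (intro mult_right_mono) auto
  with \<open>int j = n * int K\<close> \<open>int j < int K\<close> show False by simp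
qed

lemma sum_split_add: "(\<Sum>i<n+k. f i) = (\<Sum>i<n. f i) + (\<Sum>i<k. f (n + i))" for n k :: nat
  by (induction k) (auto simp: add.assoc)

lemma root_sum_zero:
  assumes "0 < j" "j < K"
  shows "(\<Sum>i<K. (\<zeta> * cis (2 * pi / real K) ^ i) ^ j) = 0"
proof -
  define w where "w = cis (2 * pi / real K) ^ j"
  have w1: "w \<noteq> 1" using root_unity_ne1[OF assms] by (simp add: w_def)
  have c1: "cis (real j * (2*pi)) = 1" by (metis cis_multiple_2pi Ints_of_nat mult.commute)
  have wK: "w ^ K = 1" using assms c1
    by (simp add: w_def DeMoivre power_mult[symmetric] mult.commute[of j K] power_mult)
  have "(\<Sum>i<K. (\<zeta> * cis (2 * pi / real K) ^ i) ^ j) = \<zeta> ^ j * (\<Sum>i<K. w ^ i)"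
    by (simp add: w_def sum_distrib_left power_mult_distrib power_mult[symmetric] mult.commute)
  also have "\<dots> = 0" using geometric_sum[OF w1, of K] wK by simp
  finally show ?thesis .
qed

lemma root_sum_K:
  assumes "0 < K"
  shows "(\<Sum>i<K. (\<zeta> * cis (2 * pi / real K) ^ i) ^ K) = of_nat K * \<zeta> ^ K"
proof -
  have "cis (2 * pi / real K) ^ K = 1" using assms by (simp add: DeMoivre)
  hence "(\<zeta> * cis (2 * pi / real K) ^ i) ^ K = \<zeta> ^ K" for i
    by (simp add: power_mult_distrib power_mult[symmetric] mult.commute[of i K] power_mult)
  thus ?thesis by simp
qed

definition psum :: "nat \<Rightarrow> (nat \<Rightarrow> complex) \<Rightarrow> nat \<Rightarrow> complex" where
  "psum N z j = (\<Sum>i<N. z i ^ j)"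

definition Tm :: "nat \<Rightarrow> (nat \<Rightarrow> complex) \<Rightarrow> nat \<Rightarrow> (nat \<Rightarrow> complex) \<Rightarrow> (nat \<Rightarrow> nat) \<Rightarrow> complex" where
  "Tm K s N z em = (\<Prod>j\<in>{1..K}. (s N * psum N z j) ^ em j) * z 0 ^ em 0"

lemma unit_root:
  assumes "cmod x = 1" "0 < K"
  obtains \<zeta> :: complex where "cmod \<zeta> = 1" "\<zeta> ^ K = x"
proof -
  have "x \<noteq> 0" using assms by auto
  have "cis (Arg x / real K) ^ K = cis (Arg x)" using assms by (simp add: DeMoivre)
  also have "\<dots> = x" using \<open>x \<noteq> 0\<close> assms by (simp add: cis_Arg sgn_eq)
  finally show ?thesis using that[of "cis (Arg x / real K)"] by simp
qed

lemma main_ind: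
  fixes E :: "'m \<Rightarrow> nat \<Rightarrow> nat" and c :: "'m \<Rightarrow> complex"
  assumes "finite M" "\<forall>N. N \<ge> 1 \<longrightarrow> s N \<noteq> 0"
    and "\<forall>N z. N \<ge> 1 \<longrightarrow> (\<forall>i<N. cmod (z i) = 1) \<longrightarrow> (\<Sum>m\<in>M. c m * Tm K s N z (E m)) = 0"
  shows "(\<Sum>m\<in>{m\<in>M. \<forall>j\<le>K. E m j = f j}. c m) = 0"
  using assms
proof (induction K arbitrary: M s f)
  case 0
  have H: "(\<Sum>m\<in>M. c m * 1 * x ^ E m 0) = 0" if "x \<in> {x. cmod x = 1}" for x
    using "0.prems"(3)[rule_format, of 1 "\<lambda>_. x"] that by (simp add: Tm_def)
  have "(\<Sum>m\<in>{m\<in>M. E m 0 = f 0}. c m * 1) = 0"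
    by (rule fiber_zero[OF "0.prems"(1) unit_circle_infinite H])
  moreover have "{m\<in>M. \<forall>j\<le>0. E m j = f j} = {m\<in>M. E m 0 = f 0}" by auto
  ultimately show ?case by simp
next
  case (Suc k)
  define Kc where "Kc = Suc k"
  define s' where "s' n = s (n + Kc)" for n :: nat
  define \<omega> where "\<omega> = cis (2 * pi / real Kc)"
  have Kc0: "0 < Kc" by (simp add: Kc_def)
  have He: "\<forall>n z'. n \<ge> 1 \<longrightarrow> (\<forall>i<n. cmod (z' i) = 1) \<longrightarrow>
      (\<Sum>m\<in>{m\<in>M. E m Kc = e}. c m * Tm k s' n z' (E m)) = 0" for e
  proof (intro allI impI)
    fix n :: nat and z' :: "nat \<Rightarrow> complex" assume n1: "n \<ge> 1" and zu: "\<forall>i<n. cmod (z' i) = 1"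
    define A where "A = s (n + Kc) * psum n z' Kc"
    define B where "B = s (n + Kc) * of_nat Kc"
    have B0: "B \<noteq> 0" using Suc.prems(2) Kc0 by (simp add: B_def)
    define S where "S = (\<lambda>x. A + B * x) ` {x. cmod x = 1}"
    have infS: "infinite S" unfolding S_def
    proof
      assume "finite ((\<lambda>x. A + B * x) ` {x. cmod x = 1})"
      moreover have "inj_on (\<lambda>x. A + B * x) {x. cmod x = 1}" using B0 by (auto simp: inj_on_def)
      ultimately show False using unit_circle_infinite finite_imageD by blast
    qed
    have HS: "(\<Sum>m\<in>M. c m * Tm k s' n z' (E m) * w ^ E m Kc) = 0" if "w \<in> S" for w
    proof -
      obtain x where x: "cmod x = 1" "w = A + B * x" using \<open>w \<in> S\<close> by (auto simp: S_def)
      obtain \<zeta> where \<zeta>: "cmod \<zeta> = 1" "\<zeta> ^ Kc = x" using unit_root[OF x(1) Kc0] by blast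
      define z where "z i = (if i < n then z' i else \<zeta> * \<omega> ^ (i - n))" for i
      have zu2: "\<forall>i<n + Kc. cmod (z i) = 1"
        using zu \<zeta> by (auto simp: z_def \<omega>_def norm_mult norm_power)
      have ps: "psum (n + Kc) z j = psum n z' j + (\<Sum>i<Kc. (\<zeta> * \<omega> ^ i) ^ j)" for j
        unfolding psum_def sum_split_add by (simp add: z_def)
      have ps1: "psum (n + Kc) z j = psum n z' j" if "0 < j" "j < Kc" for j
        using ps[of j] root_sum_zero[OF that, of \<zeta>] by (simp add: \<omega>_def)
      have ps2: "s (n + Kc) * psum (n + Kc) z Kc = w"
        using ps[of Kc] root_sum_K[OF Kc0, of \<zeta>] \<zeta> x
        by (simp add: \<omega>_def A_def B_def algebra_simps)
      have z0: "z 0 = z' 0" using n1 by (simp add: z_def)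
      have T: "Tm Kc s (n + Kc) z em = Tm k s' n z' em * w ^ em Kc" for em
      proof -
        have "{1..Kc} = insert Kc {1..k}" by (auto simp: Kc_def)
        hence "(\<Prod>j\<in>{1..Kc}. (s (n + Kc) * psum (n + Kc) z j) ^ em j)
            = (s (n + Kc) * psum (n + Kc) z Kc) ^ em Kc * (\<Prod>j\<in>{1..k}. (s (n + Kc) * psum (n + Kc) z j) ^ em j)"
          by (simp add: Kc_def)
        also have "(\<Prod>j\<in>{1..k}. (s (n + Kc) * psum (n + Kc) z j) ^ em j)
            = (\<Prod>j\<in>{1..k}. (s' n * psum n z' j) ^ em j)"
          using ps1[unfolded Kc_def] by (intro prod.cong refl) (simp add: s'_def Kc_def)
        finally show ?thesis unfolding Tm_def ps2 z0 by simp
      qed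
      have "(\<Sum>m\<in>M. c m * Tm Kc s (n + Kc) z (E m)) = 0"
        using Suc.prems(3) n1 zu2 unfolding Kc_def by auto
      thus ?thesis by (simp add: T mult.assoc)
    qed
    show "(\<Sum>m\<in>{m\<in>M. E m Kc = e}. c m * Tm k s' n z' (E m)) = 0"
      by (rule fiber_zero[OF Suc.prems(1) infS HS])
  qed
  have "(\<Sum>m\<in>{m\<in>{m\<in>M. E m Kc = f Kc}. \<forall>j\<le>k. E m j = f j}. c m) = 0"
  proof (rule Suc.IH)
    show "finite {m\<in>M. E m Kc = f Kc}" using Suc.prems(1) by simp
    show "\<forall>N\<ge>1. s' N \<noteq> 0" using Suc.prems(2) by (simp add: s'_def)
  qed (use He in auto)
  moreover have "{m\<in>{m\<in>M. E m Kc = f Kc}. \<forall>j\<le>k. E m j = f j} = {m\<in>M. \<forall>j\<le>Suc k. E m j = f j}"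
    by (auto simp: Kc_def le_Suc_eq)
  ultimately show ?case by simp
qed

definition dm :: "nat \<Rightarrow> (nat \<Rightarrow> complex) \<Rightarrow> complex mat" where
  "dm N z = mat N N (\<lambda>(i, k). if i = k then z i else 0)"

lemma dm_carrier[simp]: "dm N z \<in> carrier_mat N N" by (simp add: dm_def)
lemma dm_dims[simp]: "dim_row (dm N z) = N" "dim_col (dm N z) = N" by (simp_all add: dm_def)

lemma dm_mult: "dm N a * dm N b = dm N (\<lambda>i. a i * b i)"
proof (rule eq_matI)
  fix i k assume ik: "i < dim_row (dm N (\<lambda>i. a i * b i))" "k < dim_col (dm N (\<lambda>i. a i * b i))"
  have "(dm N a * dm N b) $$ (i, k) = (\<Sum>l<N. (if i = l then a i else 0) * (if l = k then b l else 0))"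
    using ik by (simp add: dm_def scalar_prod_def row_def col_def atLeast0LessThan)
  also have "\<dots> = (\<Sum>l<N. if l = i then (if i = k then a i * b i else 0) else 0)"
    by (intro sum.cong refl) auto
  also have "\<dots> = (if i = k then a i * b i else 0)" using ik by (simp add: sum.delta)
  finally show "(dm N a * dm N b) $$ (i, k) = dm N (\<lambda>i. a i * b i) $$ (i, k)"
    using ik by (simp add: dm_def)
qed auto

lemma dm_one: "1\<^sub>m N = dm N (\<lambda>_. 1)"
  by (rule eq_matI) (auto simp: dm_def)

lemma dm_pow: "dm N z ^\<^sub>m n = dm N (\<lambda>i. z i ^ n)"
  by (induction n) (simp_all add: dm_one dm_mult mult.commute)

lemma dm_adj: "adj_mat (dm N z) = dm N (\<lambda>i. cnj (z i))"
  by (rule eq_matI) (auto simp: dm_def adj_mat_def)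

lemma dm_unitary:
  assumes "\<forall>i<N. cmod (z i) = 1"
  shows "dm N z \<in> unitary_group N"
proof -
  have "dm N (\<lambda>i. z i * cnj (z i)) = dm N (\<lambda>_. 1)" "dm N (\<lambda>i. cnj (z i) * z i) = dm N (\<lambda>_. 1)"
  proof -
    have u: "z i * cnj (z i) = 1" if "i < N" for i
      using complex_norm_square[of "z i"] assms that by simp
    show "dm N (\<lambda>i. z i * cnj (z i)) = dm N (\<lambda>_. 1)" "dm N (\<lambda>i. cnj (z i) * z i) = dm N (\<lambda>_. 1)"
      using u by (auto simp: dm_def mult.commute intro!: cong_mat)
  qed
  thus ?thesis
    by (simp add: unitary_group_def dm_adj dm_mult dm_one)
qed

lemma ntr_dm: "ntr N (dm N z ^\<^sub>m j) = inverse (of_nat N) * psum N z j"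
  unfolding ntr_def dm_pow by (simp add: dm_def psum_def field_simps)

theorem mainTheorem13:
  fixes p :: cpoly_uv
  assumes "\<forall>N\<ge>1. \<forall>U\<in>unitary_group N. eval_pN N p U = 0\<^sub>m N N"
  shows "p = 0"
proof (rule ccontr)
  assume "p \<noteq> 0"
  then obtain m0 where m0: "m0 \<in> Poly_Mapping.keys p" by (metis keys_eq_empty ex_in_conv)
  define K where "K = Max (insert 0 (\<Union>m\<in>Poly_Mapping.keys p. Poly_Mapping.keys m))"
  have Kb: "j \<le> K" if "m \<in> Poly_Mapping.keys p" "j \<in> Poly_Mapping.keys m" for m j
    unfolding K_def using that by (intro Max_ge) auto
  define s where "s N = inverse (of_nat N :: complex)" for N :: nat
  have "(\<Sum>m\<in>{m\<in>Poly_Mapping.keys p. \<forall>j\<le>K. Poly_Mapping.lookup m j = Poly_Mapping.lookup m0 j}.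
          Poly_Mapping.lookup p m) = 0"
  proof (rule main_ind)
    show "\<forall>N. N \<ge> 1 \<longrightarrow> s N \<noteq> 0" by (simp add: s_def)
    show "\<forall>N z. N \<ge> 1 \<longrightarrow> (\<forall>i<N. cmod (z i) = 1) \<longrightarrow>
      (\<Sum>m\<in>Poly_Mapping.keys p. Poly_Mapping.lookup p m * Tm K s N z (Poly_Mapping.lookup m)) = 0"
    proof (intro allI impI)
      fix N z assume N1: "(N::nat) \<ge> 1" and zu: "\<forall>i<N. cmod (z i) = 1"
      have "eval_pN N p (dm N z) = 0\<^sub>m N N" using assms N1 dm_unitary[OF zu] by blast
      hence "eval_pN N p (dm N z) $$ (0, 0) = 0" using N1 by simp
      moreover have "eval_pN N p (dm N z) $$ (0, 0) =
          (\<Sum>m\<in>Poly_Mapping.keys p. Poly_Mapping.lookup p m * Tm K s N z (Poly_Mapping.lookup m))"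
      proof -
        have "eval_pN N p (dm N z) $$ (0, 0) = (\<Sum>m\<in>Poly_Mapping.keys p. Poly_Mapping.lookup p m *
            (\<Prod>j\<in>Poly_Mapping.keys m - {0}. (s N * psum N z j) ^ Poly_Mapping.lookup m j) *
            z 0 ^ Poly_Mapping.lookup m 0)"
          using N1 unfolding eval_pN_def ntr_dm unfolding dm_pow by (simp add: s_def dm_def)
        also have "\<dots> = (\<Sum>m\<in>Poly_Mapping.keys p. Poly_Mapping.lookup p m * Tm K s N z (Poly_Mapping.lookup m))"
        proof (intro sum.cong refl)
          fix m assume m: "m \<in> Poly_Mapping.keys p"
          have "(\<Prod>j\<in>Poly_Mapping.keys m - {0}. (s N * psum N z j) ^ Poly_Mapping.lookup m j)
              = (\<Prod>j\<in>{1..K}. (s N * psum N z j) ^ Poly_Mapping.lookup m j)"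
          proof (rule prod.mono_neutral_left)
            show "Poly_Mapping.keys m - {0} \<subseteq> {1..K}" using Kb[OF m] by auto
            show "\<forall>i\<in>{1..K} - (Poly_Mapping.keys m - {0}). (s N * psum N z i) ^ Poly_Mapping.lookup m i = 1"
            proof
              fix i assume "i \<in> {1..K} - (Poly_Mapping.keys m - {0})"
              hence "Poly_Mapping.lookup m i = 0" by (auto simp: in_keys_iff)
              thus "(s N * psum N z i) ^ Poly_Mapping.lookup m i = 1" by simp
            qed
          qed auto
          thus "Poly_Mapping.lookup p m * (\<Prod>j\<in>Poly_Mapping.keys m - {0}. (s N * psum N z j) ^ Poly_Mapping.lookup m j) *
            z 0 ^ Poly_Mapping.lookup m 0 = Poly_Mapping.lookup p m * Tm K s N z (Poly_Mapping.lookup m)"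
            by (simp add: Tm_def mult.assoc)
        qed
        finally show ?thesis .
      qed
      ultimately show "(\<Sum>m\<in>Poly_Mapping.keys p. Poly_Mapping.lookup p m * Tm K s N z (Poly_Mapping.lookup m)) = 0"
        by simp
    qed
  qed simp
  moreover have "{m\<in>Poly_Mapping.keys p. \<forall>j\<le>K. Poly_Mapping.lookup m j = Poly_Mapping.lookup m0 j} = {m0}"
  proof (intro equalityI subsetI)
    fix m assume "m \<in> {m\<in>Poly_Mapping.keys p. \<forall>j\<le>K. Poly_Mapping.lookup m j = Poly_Mapping.lookup m0 j}"
    hence m: "m \<in> Poly_Mapping.keys p" "\<forall>j\<le>K. Poly_Mapping.lookup m j = Poly_Mapping.lookup m0 j" by auto
    have "Poly_Mapping.lookup m j = Poly_Mapping.lookup m0 j" for j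
    proof (cases "j \<le> K")
      case False
      hence "j \<notin> Poly_Mapping.keys m" "j \<notin> Poly_Mapping.keys m0" using Kb m(1) m0 by force+
      thus ?thesis by (simp add: in_keys_iff)
    qed (use m in auto)
    hence "m = m0" by (intro poly_mapping_eqI) auto
    thus "m \<in> {m0}" by simp
  qed (use m0 in auto)
  ultimately have "Poly_Mapping.lookup p m0 = 0" by simp
  with m0 show False by (simp add: in_keys_iff)
qed

end
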